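(* Let $(\mathcal A;\mathcal E)$ be an exact category and let $\mathcal J_1,\mathcal J_2$ be ideals of $\mathcal A$. If $\mathcal J_1$ and $\mathcal J_2$ are monic preenveloping, then so are $\mathcal J_1\cap\mathcal J_2$ and $\mathcal J_1+\mathcal J_2$. Dually, if $\mathcal J_1$ and $\mathcal J_2$ are epic precovering, then so are $\mathcal J_1\cap\mathcal J_2$ and $\mathcal J_1+\mathcal J_2$.
   Context: An exact category $(\mathcal A;\mathcal E)$ (in the sense of Quillen/Keller/Bühler) is an additive category $\mathcal A$ with a class $\mathcal E$ of kernel–cokernel pairs $B\xrightarrow{m}C\xrightarrow{p}A$, called conflations ($m$ an inflation, $p$ a deflation), closed under isomorphism, containing identities as inflations/deflations, with inflations and deflations closed under composition, and with pushouts of inflations along arbitrary morphisms existing and being inflations (dually for pullbacks of deflations). An ideal $\mathcal J$ of $\mathcal A$ is a family of subgroups $\mathcal J(A,B)\subseteq\mathrm{Hom}(A,B)$ closed under composition on either side with arbitrary morphisms; $\mathcal J_1\cap\mathcal J_2$ and $\mathcal J_1+\mathcal J_2$ are formed objectwise. $\mathcal J$ is preenveloping if every object $B$ has a $\mathcal J$-preenvelope: a morphism $j:B\to J$ in $\mathcal J$ through which every morphism in $\mathcal J$ with domain $B$ factors. $\mathcal J$ is monic preenveloping if every object $B$ admits a $\mathcal J$-preenvelope that is an inflation. Dually, $\mathcal I$ is epic precovering if every object admits an $\mathcal I$-precover (a morphism in $\mathcal I$ into it through which every morphism of $\mathcal I$ into it factors) that is a deflation. *)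

theory Defs
  imports Main
begin

text \<open>A (small) category whose morphisms carry their domain and codomain,
together with a group structure on each hom-set (for preadditive/additive
categories). Composition is written Cmp C g f = g after f.\<close>

record ('o, 'm) cat =
  Ob   :: "'o set"
  Ar   :: "'m set"
  Dom  :: "'m \<Rightarrow> 'o"
  Cod  :: "'m \<Rightarrow> 'o"
  Cmp  :: "'m \<Rightarrow> 'm \<Rightarrow> 'm"
  Idm  :: "'o \<Rightarrow> 'm"
  Add  :: "'m \<Rightarrow> 'm \<Rightarrow> 'm"
  Zero :: "'o \<Rightarrow> 'o \<Rightarrow> 'm"

definition hom :: "('o,'m) cat \<Rightarrow> 'o \<Rightarrow> 'o \<Rightarrow> 'm set" where
  "hom C A B = {f \<in> Ar C. Dom C f = A \<and> Cod C f = B}"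

definition category :: "('o,'m) cat \<Rightarrow> bool" where
  "category C \<longleftrightarrow>
     (\<forall>f\<in>Ar C. Dom C f \<in> Ob C \<and> Cod C f \<in> Ob C) \<and>
     (\<forall>A\<in>Ob C. Idm C A \<in> hom C A A) \<and>
     (\<forall>f\<in>Ar C. \<forall>g\<in>Ar C. Cod C f = Dom C g \<longrightarrow> Cmp C g f \<in> hom C (Dom C f) (Cod C g)) \<and>
     (\<forall>f\<in>Ar C. \<forall>g\<in>Ar C. \<forall>h\<in>Ar C. Cod C f = Dom C g \<and> Cod C g = Dom C h \<longrightarrow>
         Cmp C h (Cmp C g f) = Cmp C (Cmp C h g) f) \<and>
     (\<forall>f\<in>Ar C. Cmp C (Idm C (Cod C f)) f = f \<and> Cmp C f (Idm C (Dom C f)) = f)"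

definition preadditive :: "('o,'m) cat \<Rightarrow> bool" where
  "preadditive C \<longleftrightarrow> category C \<and>
     (\<forall>A\<in>Ob C. \<forall>B\<in>Ob C.
        Zero C A B \<in> hom C A B \<and>
        (\<forall>f\<in>hom C A B. \<forall>g\<in>hom C A B. Add C f g \<in> hom C A B) \<and>
        (\<forall>f\<in>hom C A B. \<forall>g\<in>hom C A B. \<forall>h\<in>hom C A B. Add C (Add C f g) h = Add C f (Add C g h)) \<and>
        (\<forall>f\<in>hom C A B. \<forall>g\<in>hom C A B. Add C f g = Add C g f) \<and>
        (\<forall>f\<in>hom C A B. Add C f (Zero C A B) = f) \<and>
        (\<forall>f\<in>hom C A B. \<exists>g\<in>hom C A B. Add C f g = Zero C A B)) \<and>
     (\<forall>A\<in>Ob C. \<forall>B\<in>Ob C. \<forall>D\<in>Ob C.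
        (\<forall>f\<in>hom C A B. \<forall>g\<in>hom C B D. \<forall>g'\<in>hom C B D.
            Cmp C (Add C g g') f = Add C (Cmp C g f) (Cmp C g' f)) \<and>
        (\<forall>f\<in>hom C A B. \<forall>f'\<in>hom C A B. \<forall>g\<in>hom C B D.
            Cmp C g (Add C f f') = Add C (Cmp C g f) (Cmp C g f')))"

definition is_biproduct :: "('o,'m) cat \<Rightarrow> 'o \<Rightarrow> 'o \<Rightarrow> 'o \<Rightarrow> 'm \<Rightarrow> 'm \<Rightarrow> 'm \<Rightarrow> 'm \<Rightarrow> bool" where
  "is_biproduct C A B P i1 i2 p1 p2 \<longleftrightarrow>
     P \<in> Ob C \<and> i1 \<in> hom C A P \<and> i2 \<in> hom C B P \<and> p1 \<in> hom C P A \<and> p2 \<in> hom C P B \<and>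
     Cmp C p1 i1 = Idm C A \<and> Cmp C p2 i2 = Idm C B \<and>
     Cmp C p1 i2 = Zero C B A \<and> Cmp C p2 i1 = Zero C A B \<and>
     Add C (Cmp C i1 p1) (Cmp C i2 p2) = Idm C P"

definition additive :: "('o,'m) cat \<Rightarrow> bool" where
  "additive C \<longleftrightarrow> preadditive C \<and>
     (\<exists>Z\<in>Ob C. Idm C Z = Zero C Z Z) \<and>
     (\<forall>A\<in>Ob C. \<forall>B\<in>Ob C. \<exists>P i1 i2 p1 p2. is_biproduct C A B P i1 i2 p1 p2)"

definition is_kernel :: "('o,'m) cat \<Rightarrow> 'm \<Rightarrow> 'm \<Rightarrow> bool" where
  "is_kernel C m p \<longleftrightarrow> m \<in> Ar C \<and> p \<in> Ar C \<and> Cod C m = Dom C p \<and>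
     Cmp C p m = Zero C (Dom C m) (Cod C p) \<and>
     (\<forall>f\<in>Ar C. Cod C f = Dom C p \<and> Cmp C p f = Zero C (Dom C f) (Cod C p) \<longrightarrow>
        (\<exists>!g. g \<in> hom C (Dom C f) (Dom C m) \<and> Cmp C m g = f))"

definition is_cokernel :: "('o,'m) cat \<Rightarrow> 'm \<Rightarrow> 'm \<Rightarrow> bool" where
  "is_cokernel C p m \<longleftrightarrow> m \<in> Ar C \<and> p \<in> Ar C \<and> Cod C m = Dom C p \<and>
     Cmp C p m = Zero C (Dom C m) (Cod C p) \<and>
     (\<forall>f\<in>Ar C. Dom C f = Cod C m \<and> Cmp C f m = Zero C (Dom C m) (Cod C f) \<longrightarrow>
        (\<exists>!g. g \<in> hom C (Cod C p) (Cod C f) \<and> Cmp C g p = f))"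

definition kc_pair :: "('o,'m) cat \<Rightarrow> 'm \<Rightarrow> 'm \<Rightarrow> bool" where
  "kc_pair C m p \<longleftrightarrow> is_kernel C m p \<and> is_cokernel C p m"

definition iso :: "('o,'m) cat \<Rightarrow> 'm \<Rightarrow> bool" where
  "iso C f \<longleftrightarrow> f \<in> Ar C \<and> (\<exists>g\<in>hom C (Cod C f) (Dom C f).
     Cmp C g f = Idm C (Dom C f) \<and> Cmp C f g = Idm C (Cod C f))"

definition is_pushout :: "('o,'m) cat \<Rightarrow> 'm \<Rightarrow> 'm \<Rightarrow> 'm \<Rightarrow> 'm \<Rightarrow> bool" where
  "is_pushout C m f m' f' \<longleftrightarrow>
     m \<in> Ar C \<and> f \<in> Ar C \<and> m' \<in> Ar C \<and> f' \<in> Ar C \<and> Dom C m = Dom C f \<and>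
     Dom C m' = Cod C f \<and> Dom C f' = Cod C m \<and> Cod C m' = Cod C f' \<and>
     Cmp C f' m = Cmp C m' f \<and>
     (\<forall>g\<in>Ar C. \<forall>h\<in>Ar C. Dom C g = Cod C m \<and> Dom C h = Cod C f \<and> Cod C g = Cod C h \<and>
        Cmp C g m = Cmp C h f \<longrightarrow>
        (\<exists>!u. u \<in> hom C (Cod C f') (Cod C g) \<and> Cmp C u f' = g \<and> Cmp C u m' = h))"

definition is_pullback :: "('o,'m) cat \<Rightarrow> 'm \<Rightarrow> 'm \<Rightarrow> 'm \<Rightarrow> 'm \<Rightarrow> bool" where
  "is_pullback C p f p' f' \<longleftrightarrow>
     p \<in> Ar C \<and> f \<in> Ar C \<and> p' \<in> Ar C \<and> f' \<in> Ar C \<and> Cod C p = Cod C f \<and>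
     Cod C p' = Dom C f \<and> Cod C f' = Dom C p \<and> Dom C p' = Dom C f' \<and>
     Cmp C p f' = Cmp C f p' \<and>
     (\<forall>g\<in>Ar C. \<forall>h\<in>Ar C. Cod C g = Dom C p \<and> Cod C h = Dom C f \<and> Dom C g = Dom C h \<and>
        Cmp C p g = Cmp C f h \<longrightarrow>
        (\<exists>!u. u \<in> hom C (Dom C g) (Dom C f') \<and> Cmp C f' u = g \<and> Cmp C p' u = h))"

text \<open>A conflation is a pair (m, p) in E; m is an inflation, p a deflation.\<close>
definition inflation :: "('o,'m) cat \<Rightarrow> ('m \<times> 'm) set \<Rightarrow> 'm \<Rightarrow> bool" where
  "inflation C E m \<longleftrightarrow> (\<exists>p. (m, p) \<in> E)"

definition deflation :: "('o,'m) cat \<Rightarrow> ('m \<times> 'm) set \<Rightarrow> 'm \<Rightarrow> bool" where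
  "deflation C E p \<longleftrightarrow> (\<exists>m. (m, p) \<in> E)"

definition exact_category :: "('o,'m) cat \<Rightarrow> ('m \<times> 'm) set \<Rightarrow> bool" where
  "exact_category C E \<longleftrightarrow> additive C \<and>
     (\<forall>(m, p)\<in>E. kc_pair C m p) \<and>
     \<comment> \<open>closed under isomorphism of kernel-cokernel pairs\<close>
     (\<forall>(m, p)\<in>E. \<forall>m' p' a b c. kc_pair C m' p' \<and>
        iso C a \<and> iso C b \<and> iso C c \<and>
        a \<in> hom C (Dom C m) (Dom C m') \<and> b \<in> hom C (Cod C m) (Cod C m') \<and>
        c \<in> hom C (Cod C p) (Cod C p') \<and>
        Cmp C b m = Cmp C m' a \<and> Cmp C c p = Cmp C p' b \<longrightarrow> (m', p') \<in> E) \<and>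
     (\<forall>A\<in>Ob C. inflation C E (Idm C A) \<and> deflation C E (Idm C A)) \<and>
     (\<forall>m n. inflation C E m \<and> inflation C E n \<and> Cod C m = Dom C n \<longrightarrow> inflation C E (Cmp C n m)) \<and>
     (\<forall>p q. deflation C E p \<and> deflation C E q \<and> Cod C p = Dom C q \<longrightarrow> deflation C E (Cmp C q p)) \<and>
     (\<forall>m f. inflation C E m \<and> f \<in> Ar C \<and> Dom C f = Dom C m \<longrightarrow>
        (\<exists>m' f'. is_pushout C m f m' f' \<and> inflation C E m')) \<and>
     (\<forall>p f. deflation C E p \<and> f \<in> Ar C \<and> Cod C f = Cod C p \<longrightarrow>
        (\<exists>p' f'. is_pullback C p f p' f' \<and> deflation C E p'))"

definition ideal :: "('o,'m) cat \<Rightarrow> 'm set \<Rightarrow> bool" where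
  "ideal C J \<longleftrightarrow> J \<subseteq> Ar C \<and>
     (\<forall>A\<in>Ob C. \<forall>B\<in>Ob C. Zero C A B \<in> J) \<and>
     (\<forall>f\<in>J. \<forall>g\<in>J. Dom C f = Dom C g \<and> Cod C f = Cod C g \<longrightarrow> Add C f g \<in> J) \<and>
     (\<forall>f\<in>J. \<exists>g\<in>J. Dom C g = Dom C f \<and> Cod C g = Cod C f \<and>
        Add C f g = Zero C (Dom C f) (Cod C f)) \<and>
     (\<forall>f\<in>J. \<forall>g\<in>Ar C. Dom C g = Cod C f \<longrightarrow> Cmp C g f \<in> J) \<and>
     (\<forall>f\<in>J. \<forall>h\<in>Ar C. Cod C h = Dom C f \<longrightarrow> Cmp C f h \<in> J)"

definition ideal_sum :: "('o,'m) cat \<Rightarrow> 'm set \<Rightarrow> 'm set \<Rightarrow> 'm set" where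
  "ideal_sum C J1 J2 = {Add C f g | f g. f \<in> J1 \<and> g \<in> J2 \<and> Dom C f = Dom C g \<and> Cod C f = Cod C g}"

definition is_preenvelope :: "('o,'m) cat \<Rightarrow> 'm set \<Rightarrow> 'o \<Rightarrow> 'm \<Rightarrow> bool" where
  "is_preenvelope C J B j \<longleftrightarrow> j \<in> J \<and> Dom C j = B \<and>
     (\<forall>f\<in>J. Dom C f = B \<longrightarrow> (\<exists>g\<in>hom C (Cod C j) (Cod C f). Cmp C g j = f))"

definition is_precover :: "('o,'m) cat \<Rightarrow> 'm set \<Rightarrow> 'o \<Rightarrow> 'm \<Rightarrow> bool" where
  "is_precover C J A i \<longleftrightarrow> i \<in> J \<and> Cod C i = A \<and>
     (\<forall>f\<in>J. Cod C f = A \<longrightarrow> (\<exists>g\<in>hom C (Dom C f) (Dom C i). Cmp C i g = f))"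

definition monic_preenveloping :: "('o,'m) cat \<Rightarrow> ('m \<times> 'm) set \<Rightarrow> 'm set \<Rightarrow> bool" where
  "monic_preenveloping C E J \<longleftrightarrow>
     (\<forall>B\<in>Ob C. \<exists>j. is_preenvelope C J B j \<and> inflation C E j)"

definition epic_precovering :: "('o,'m) cat \<Rightarrow> ('m \<times> 'm) set \<Rightarrow> 'm set \<Rightarrow> bool" where
  "epic_precovering C E J \<longleftrightarrow>
     (\<forall>A\<in>Ob C. \<exists>i. is_precover C J A i \<and> deflation C E i)"

end

theory Submission
  imports Defs
begin

lemma homI: "f \<in> Ar C \<Longrightarrow> Dom C f = A \<Longrightarrow> Cod C f = B \<Longrightarrow> f \<in> hom C A B"
  by (simp add: hom_def)
lemma homD: "f \<in> hom C A B \<Longrightarrow> f \<in> Ar C \<and> Dom C f = A \<and> Cod C f = B"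
  by (simp add: hom_def)
lemma hom_Ar: "f \<in> Ar C \<Longrightarrow> f \<in> hom C (Dom C f) (Cod C f)"
  by (simp add: hom_def)

lemma cmp_hom: "category C \<Longrightarrow> f \<in> hom C A B \<Longrightarrow> g \<in> hom C B D \<Longrightarrow> Cmp C g f \<in> hom C A D"
  unfolding category_def hom_def by auto
lemma cmp_assoc: "category C \<Longrightarrow> f \<in> hom C A B \<Longrightarrow> g \<in> hom C B D \<Longrightarrow> h \<in> hom C D E'
   \<Longrightarrow> Cmp C h (Cmp C g f) = Cmp C (Cmp C h g) f"
  unfolding category_def hom_def by auto
lemma id_hom: "category C \<Longrightarrow> A \<in> Ob C \<Longrightarrow> Idm C A \<in> hom C A A"
  unfolding category_def by auto
lemma id_l: "category C \<Longrightarrow> f \<in> hom C A B \<Longrightarrow> Cmp C (Idm C B) f = f"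
  unfolding category_def hom_def by auto
lemma id_r: "category C \<Longrightarrow> f \<in> hom C A B \<Longrightarrow> Cmp C f (Idm C A) = f"
  unfolding category_def hom_def by auto
lemma hom_obs: "category C \<Longrightarrow> f \<in> hom C A B \<Longrightarrow> A \<in> Ob C \<and> B \<in> Ob C"
  unfolding category_def hom_def by auto

lemma pa_cat: "preadditive C \<Longrightarrow> category C"
  unfolding preadditive_def by (elim conjE)
lemma pa0: "preadditive C \<Longrightarrow> A \<in> Ob C \<Longrightarrow> B \<in> Ob C \<Longrightarrow> 
        Zero C A B \<in> hom C A B \<and>
        (\<forall>f\<in>hom C A B. \<forall>g\<in>hom C A B. Add C f g \<in> hom C A B) \<and>
        (\<forall>f\<in>hom C A B. \<forall>g\<in>hom C A B. \<forall>h\<in>hom C A B. Add C (Add C f g) h = Add C f (Add C g h)) \<and>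
        (\<forall>f\<in>hom C A B. \<forall>g\<in>hom C A B. Add C f g = Add C g f) \<and>
        (\<forall>f\<in>hom C A B. Add C f (Zero C A B) = f) \<and>
        (\<forall>f\<in>hom C A B. \<exists>g\<in>hom C A B. Add C f g = Zero C A B)"
  unfolding preadditive_def by (elim conjE) (drule bspec, assumption, drule bspec, assumption)
lemma pa1: "preadditive C \<Longrightarrow> A \<in> Ob C \<Longrightarrow> B \<in> Ob C \<Longrightarrow> D \<in> Ob C \<Longrightarrow> 
        (\<forall>f\<in>hom C A B. \<forall>g\<in>hom C B D. \<forall>g'\<in>hom C B D.
            Cmp C (Add C g g') f = Add C (Cmp C g f) (Cmp C g' f)) \<and>
        (\<forall>f\<in>hom C A B. \<forall>f'\<in>hom C A B. \<forall>g\<in>hom C B D.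
            Cmp C g (Add C f f') = Add C (Cmp C g f) (Cmp C g f'))"
  unfolding preadditive_def by (elim conjE) (drule bspec, assumption, drule bspec, assumption, drule bspec, assumption)

lemma zero_hom: "preadditive C \<Longrightarrow> A \<in> Ob C \<Longrightarrow> B \<in> Ob C \<Longrightarrow> Zero C A B \<in> hom C A B"
  by (rule pa0[THEN conjunct1])
lemma pa0h: "preadditive C \<Longrightarrow> f \<in> hom C A B \<Longrightarrow> 
        Zero C A B \<in> hom C A B \<and>
        (\<forall>f\<in>hom C A B. \<forall>g\<in>hom C A B. Add C f g \<in> hom C A B) \<and>
        (\<forall>f\<in>hom C A B. \<forall>g\<in>hom C A B. \<forall>h\<in>hom C A B. Add C (Add C f g) h = Add C f (Add C g h)) \<and>
        (\<forall>f\<in>hom C A B. \<forall>g\<in>hom C A B. Add C f g = Add C g f) \<and>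
        (\<forall>f\<in>hom C A B. Add C f (Zero C A B) = f) \<and>
        (\<forall>f\<in>hom C A B. \<exists>g\<in>hom C A B. Add C f g = Zero C A B)"
proof -
  assume a: "preadditive C" "f \<in> hom C A B"
  have "A \<in> Ob C" "B \<in> Ob C" using hom_obs[OF pa_cat[OF a(1)] a(2)] by auto
  then show ?thesis by (rule pa0[OF a(1)])
qed
lemma pa1h: "preadditive C \<Longrightarrow> f \<in> hom C A B \<Longrightarrow> g \<in> hom C B D \<Longrightarrow>
        (\<forall>f\<in>hom C A B. \<forall>g\<in>hom C B D. \<forall>g'\<in>hom C B D.
            Cmp C (Add C g g') f = Add C (Cmp C g f) (Cmp C g' f)) \<and>
        (\<forall>f\<in>hom C A B. \<forall>f'\<in>hom C A B. \<forall>g\<in>hom C B D.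
            Cmp C g (Add C f f') = Add C (Cmp C g f) (Cmp C g f'))"
proof -
  assume a: "preadditive C" "f \<in> hom C A B" "g \<in> hom C B D"
  have "A \<in> Ob C" "B \<in> Ob C" "D \<in> Ob C" using hom_obs[OF pa_cat[OF a(1)] a(2)] hom_obs[OF pa_cat[OF a(1)] a(3)] by auto
  then show ?thesis by (rule pa1[OF a(1)])
qed
lemma add_hom: "preadditive C \<Longrightarrow> f \<in> hom C A B \<Longrightarrow> g \<in> hom C A B \<Longrightarrow> Add C f g \<in> hom C A B"
  by (drule pa0h, assumption) blast
lemma add_assoc: "preadditive C \<Longrightarrow> f \<in> hom C A B \<Longrightarrow> g \<in> hom C A B \<Longrightarrow> h \<in> hom C A B
   \<Longrightarrow> Add C (Add C f g) h = Add C f (Add C g h)"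
  by (drule pa0h, assumption) blast
lemma add_comm: "preadditive C \<Longrightarrow> f \<in> hom C A B \<Longrightarrow> g \<in> hom C A B \<Longrightarrow> Add C f g = Add C g f"
  by (drule pa0h, assumption) blast
lemma add_zero: "preadditive C \<Longrightarrow> f \<in> hom C A B \<Longrightarrow> Add C f (Zero C A B) = f"
  by (drule pa0h, assumption) blast
lemma neg_ex: "preadditive C \<Longrightarrow> f \<in> hom C A B \<Longrightarrow> \<exists>g\<in>hom C A B. Add C f g = Zero C A B"
  by (drule pa0h, assumption) blast
lemma dist_r: "preadditive C \<Longrightarrow> f \<in> hom C A B \<Longrightarrow> g \<in> hom C B D \<Longrightarrow> g' \<in> hom C B D
   \<Longrightarrow> Cmp C (Add C g g') f = Add C (Cmp C g f) (Cmp C g' f)"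
  by (drule pa1h, assumption, assumption) blast
lemma dist_l: "preadditive C \<Longrightarrow> f \<in> hom C A B \<Longrightarrow> f' \<in> hom C A B \<Longrightarrow> g \<in> hom C B D
   \<Longrightarrow> Cmp C g (Add C f f') = Add C (Cmp C g f) (Cmp C g f')"
  by (drule pa1h, assumption, assumption) blast

lemma zero_add: "preadditive C \<Longrightarrow> f \<in> hom C A B \<Longrightarrow> Add C (Zero C A B) f = f"
  by (metis add_comm add_zero hom_obs pa_cat zero_hom)

lemma add_cancel:
  assumes pa: "preadditive C" and x: "x \<in> hom C A B" and y: "y \<in> hom C A B" and z: "z \<in> hom C A B"
    and eq: "Add C x z = Add C y z"
  shows "x = y"
proof -
  obtain n where n: "n \<in> hom C A B" "Add C z n = Zero C A B" using neg_ex[OF pa z] by blast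
  have "x = Add C x (Add C z n)" using n add_zero[OF pa x] by simp
  also have "\<dots> = Add C (Add C x z) n" using add_assoc[OF pa x z n(1)] by simp
  also have "\<dots> = Add C (Add C y z) n" using eq by simp
  also have "\<dots> = Add C y (Add C z n)" using add_assoc[OF pa y z n(1)] by simp
  also have "\<dots> = y" using n add_zero[OF pa y] by simp
  finally show ?thesis .
qed

lemma idem_zero:
  assumes pa: "preadditive C" and x: "x \<in> hom C A B" and eq: "x = Add C x x"
  shows "x = Zero C A B"
proof -
  have ob: "A \<in> Ob C" "B \<in> Ob C" using hom_obs[OF pa_cat[OF pa] x] by auto
  have "Add C x x = Add C (Zero C A B) x" using eq zero_add[OF pa x] by simp
  thus ?thesis using add_cancel[OF pa x zero_hom[OF pa ob] x] eq by simp
qed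

lemma comp_zero:
  assumes pa: "preadditive C" and f: "f \<in> hom C B D" and A: "A \<in> Ob C"
  shows "Cmp C f (Zero C A B) = Zero C A D"
proof -
  have ob: "B \<in> Ob C" "D \<in> Ob C" using hom_obs[OF pa_cat[OF pa] f] by auto
  have z: "Zero C A B \<in> hom C A B" using zero_hom[OF pa A ob(1)] .
  have x: "Cmp C f (Zero C A B) \<in> hom C A D" using cmp_hom[OF pa_cat[OF pa] z f] .
  have "Cmp C f (Zero C A B) = Cmp C f (Add C (Zero C A B) (Zero C A B))"
    using add_zero[OF pa z] by simp
  also have "\<dots> = Add C (Cmp C f (Zero C A B)) (Cmp C f (Zero C A B))"
    using dist_l[OF pa z z f] .
  finally show ?thesis using idem_zero[OF pa x] by simp
qed

lemma zero_comp:
  assumes pa: "preadditive C" and f: "f \<in> hom C A B" and D: "D \<in> Ob C"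
  shows "Cmp C (Zero C B D) f = Zero C A D"
proof -
  have ob: "A \<in> Ob C" "B \<in> Ob C" using hom_obs[OF pa_cat[OF pa] f] by auto
  have z: "Zero C B D \<in> hom C B D" using zero_hom[OF pa ob(2) D] .
  have x: "Cmp C (Zero C B D) f \<in> hom C A D" using cmp_hom[OF pa_cat[OF pa] f z] .
  have "Cmp C (Zero C B D) f = Cmp C (Add C (Zero C B D) (Zero C B D)) f"
    using add_zero[OF pa z] by simp
  also have "\<dots> = Add C (Cmp C (Zero C B D) f) (Cmp C (Zero C B D) f)"
    using dist_r[OF pa f z z] .
  finally show ?thesis using idem_zero[OF pa x] by simp
qed

lemma ec_pa: "exact_category C E \<Longrightarrow> preadditive C"
  unfolding exact_category_def additive_def by (elim conjE)
lemma ec0: "exact_category C E \<Longrightarrow> (\<forall>(m, p)\<in>E. kc_pair C m p) \<and>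
     (\<forall>A\<in>Ob C. inflation C E (Idm C A) \<and> deflation C E (Idm C A)) \<and>
     (\<forall>m n. inflation C E m \<and> inflation C E n \<and> Cod C m = Dom C n \<longrightarrow> inflation C E (Cmp C n m)) \<and>
     (\<forall>p q. deflation C E p \<and> deflation C E q \<and> Cod C p = Dom C q \<longrightarrow> deflation C E (Cmp C q p)) \<and>
     (\<forall>m f. inflation C E m \<and> f \<in> Ar C \<and> Dom C f = Dom C m \<longrightarrow>
        (\<exists>m' f'. is_pushout C m f m' f' \<and> inflation C E m')) \<and>
     (\<forall>p f. deflation C E p \<and> f \<in> Ar C \<and> Cod C f = Cod C p \<longrightarrow>
        (\<exists>p' f'. is_pullback C p f p' f' \<and> deflation C E p'))"
  unfolding exact_category_def by (elim conjE) (intro conjI; assumption)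
lemma ec_kc: "exact_category C E \<Longrightarrow> (m, p) \<in> E \<Longrightarrow> kc_pair C m p"
  using ec0 by fast
lemma ec_id: "exact_category C E \<Longrightarrow> A \<in> Ob C \<Longrightarrow> inflation C E (Idm C A) \<and> deflation C E (Idm C A)"
  using ec0 by fast
lemma ec_infc: "exact_category C E \<Longrightarrow> inflation C E m \<Longrightarrow> inflation C E n \<Longrightarrow> Cod C m = Dom C n
   \<Longrightarrow> inflation C E (Cmp C n m)"
  using ec0 by fast
lemma ec_defc: "exact_category C E \<Longrightarrow> deflation C E p \<Longrightarrow> deflation C E q \<Longrightarrow> Cod C p = Dom C q
   \<Longrightarrow> deflation C E (Cmp C q p)"
  using ec0 by fast
lemma ec_po: "exact_category C E \<Longrightarrow> inflation C E m \<Longrightarrow> f \<in> Ar C \<Longrightarrow> Dom C f = Dom C m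
   \<Longrightarrow> \<exists>m' f'. is_pushout C m f m' f' \<and> inflation C E m'"
  using ec0 by fast
lemma ec_pb: "exact_category C E \<Longrightarrow> deflation C E p \<Longrightarrow> f \<in> Ar C \<Longrightarrow> Cod C f = Cod C p
   \<Longrightarrow> \<exists>p' f'. is_pullback C p f p' f' \<and> deflation C E p'"
  using ec0 by fast


lemma ideal_l: "ideal C J \<Longrightarrow> f \<in> J \<Longrightarrow> g \<in> Ar C \<Longrightarrow> Dom C g = Cod C f \<Longrightarrow> Cmp C g f \<in> J"
  unfolding ideal_def by blast
lemma ideal_r: "ideal C J \<Longrightarrow> f \<in> J \<Longrightarrow> h \<in> Ar C \<Longrightarrow> Cod C h = Dom C f \<Longrightarrow> Cmp C f h \<in> J"
  unfolding ideal_def by blast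
lemma ideal_Ar: "ideal C J \<Longrightarrow> f \<in> J \<Longrightarrow> f \<in> Ar C"
  unfolding ideal_def by blast

lemma po_D: "is_pushout C m f m' f' \<Longrightarrow> m' \<in> hom C (Cod C f) (Cod C f') \<and> f' \<in> hom C (Cod C m) (Cod C f')
  \<and> Cmp C f' m = Cmp C m' f \<and> (\<forall>g h. g \<in> hom C (Cod C m) Y \<and> h \<in> hom C (Cod C f) Y \<and> Cmp C g m = Cmp C h f
     \<longrightarrow> (\<exists>u. u \<in> hom C (Cod C f') Y \<and> Cmp C u f' = g \<and> Cmp C u m' = h))"
  unfolding is_pushout_def hom_def
  apply (elim conjE)
  apply (intro conjI allI impI; simp?)
  apply (elim conjE)
  apply (drule_tac x=g in bspec, assumption, drule_tac x=h in bspec, assumption)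
  apply auto
  done

lemma pb_D: "is_pullback C p f p' f' \<Longrightarrow> p' \<in> hom C (Dom C f') (Dom C f) \<and> f' \<in> hom C (Dom C f') (Dom C p)
  \<and> Cmp C p f' = Cmp C f p' \<and> (\<forall>g h. g \<in> hom C W (Dom C p) \<and> h \<in> hom C W (Dom C f) \<and> Cmp C p g = Cmp C f h
     \<longrightarrow> (\<exists>u. u \<in> hom C W (Dom C f') \<and> Cmp C f' u = g \<and> Cmp C p' u = h))"
  unfolding is_pullback_def hom_def
  apply (elim conjE)
  apply (intro conjI allI impI; simp?)
  apply (elim conjE)
  apply (drule_tac x=g in bspec, assumption, drule_tac x=h in bspec, assumption)
  apply auto
  done

lemma kzero_in:
  assumes ec: "exact_category C E" and X: "X \<in> Ob C"
  shows "\<exists>K m. K \<in> Ob C \<and> m \<in> hom C K X \<and> inflation C E m \<and> (\<forall>Y h. h \<in> hom C K Y \<longrightarrow> h = Zero C K Y)"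
proof -
  have pa: "preadditive C" using ec_pa[OF ec] .
  have cat: "category C" using pa_cat[OF pa] .
  obtain m where mE: "(m, Idm C X) \<in> E" using ec_id[OF ec X] unfolding deflation_def by blast
  have inf: "inflation C E m" unfolding inflation_def using mE by blast
  have ker: "is_kernel C m (Idm C X)" using ec_kc[OF ec mE] unfolding kc_pair_def by blast
  have idX: "Idm C X \<in> hom C X X" using id_hom[OF cat X] .
  define K where "K = Dom C m"
  have mAr: "m \<in> Ar C" and cm: "Cod C m = X" and mz: "Cmp C (Idm C X) m = Zero C K X"
    and univ: "\<forall>f\<in>Ar C. Cod C f = Dom C (Idm C X) \<and> Cmp C (Idm C X) f = Zero C (Dom C f) (Cod C (Idm C X)) \<longrightarrow>
        (\<exists>!g. g \<in> hom C (Dom C f) (Dom C m) \<and> Cmp C m g = f)"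
    using ker idX unfolding is_kernel_def K_def hom_def by auto
  have mh: "m \<in> hom C K X" using mAr cm K_def by (simp add: hom_def)
  have K: "K \<in> Ob C" using hom_obs[OF cat mh] by auto
  have m0: "m = Zero C K X" using mz id_l[OF cat mh] by simp
  have "\<exists>!g. g \<in> hom C K K \<and> Cmp C m g = m" using univ mAr cm mz idX K_def unfolding hom_def by auto
  moreover have "Idm C K \<in> hom C K K \<and> Cmp C m (Idm C K) = m" using id_hom[OF cat K] id_r[OF cat mh] by simp
  moreover have "Zero C K K \<in> hom C K K \<and> Cmp C m (Zero C K K) = m"
    using zero_hom[OF pa K K] comp_zero[OF pa mh K] m0 by simp
  ultimately have idz: "Idm C K = Zero C K K" by blast
  have "\<forall>Y h. h \<in> hom C K Y \<longrightarrow> h = Zero C K Y"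
  proof (intro allI impI)
    fix Y h assume h: "h \<in> hom C K Y"
    have "h = Cmp C h (Idm C K)" using id_r[OF cat h] by simp
    also have "\<dots> = Zero C K Y" using idz comp_zero[OF pa h K] by simp
    finally show "h = Zero C K Y" .
  qed
  thus ?thesis using K mh inf by blast
qed

lemma kzero_out:
  assumes ec: "exact_category C E" and X: "X \<in> Ob C"
  shows "\<exists>K p. K \<in> Ob C \<and> p \<in> hom C X K \<and> deflation C E p \<and> (\<forall>Y h. h \<in> hom C Y K \<longrightarrow> h = Zero C Y K)"
proof -
  have pa: "preadditive C" using ec_pa[OF ec] .
  have cat: "category C" using pa_cat[OF pa] .
  obtain p where pE: "(Idm C X, p) \<in> E" using ec_id[OF ec X] unfolding inflation_def by blast
  have def: "deflation C E p" unfolding deflation_def using pE by blast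
  have cok: "is_cokernel C p (Idm C X)" using ec_kc[OF ec pE] unfolding kc_pair_def by blast
  have idX: "Idm C X \<in> hom C X X" using id_hom[OF cat X] .
  define K where "K = Cod C p"
  have pAr: "p \<in> Ar C" and dp: "Dom C p = X" and pz: "Cmp C p (Idm C X) = Zero C X K"
    and univ: "\<forall>f\<in>Ar C. Dom C f = Cod C (Idm C X) \<and> Cmp C f (Idm C X) = Zero C (Dom C (Idm C X)) (Cod C f) \<longrightarrow>
        (\<exists>!g. g \<in> hom C (Cod C p) (Cod C f) \<and> Cmp C g p = f)"
    using cok idX unfolding is_cokernel_def K_def hom_def by auto
  have ph: "p \<in> hom C X K" using pAr dp K_def by (simp add: hom_def)
  have K: "K \<in> Ob C" using hom_obs[OF cat ph] by auto
  have p0: "p = Zero C X K" using pz id_r[OF cat ph] by simp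
  have "\<exists>!g. g \<in> hom C K K \<and> Cmp C g p = p" using univ pAr dp pz idX K_def unfolding hom_def by auto
  moreover have "Idm C K \<in> hom C K K \<and> Cmp C (Idm C K) p = p" using id_hom[OF cat K] id_l[OF cat ph] by simp
  moreover have "Zero C K K \<in> hom C K K \<and> Cmp C (Zero C K K) p = p"
    using zero_hom[OF pa K K] zero_comp[OF pa ph K] p0 by simp
  ultimately have idz: "Idm C K = Zero C K K" by blast
  have "\<forall>Y h. h \<in> hom C Y K \<longrightarrow> h = Zero C Y K"
  proof (intro allI impI)
    fix Y h assume h: "h \<in> hom C Y K"
    have "h = Cmp C (Idm C K) h" using id_l[OF cat h] by simp
    also have "\<dots> = Zero C Y K" using idz zero_comp[OF pa h K] by simp
    finally show "h = Zero C Y K" .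
  qed
  thus ?thesis using K ph def by blast
qed


lemma monic_inter:
  assumes ec: "exact_category C E" and I1: "ideal C J1" and I2: "ideal C J2"
    and M1: "monic_preenveloping C E J1" and M2: "monic_preenveloping C E J2"
  shows "monic_preenveloping C E (J1 \<inter> J2)"
  unfolding monic_preenveloping_def
proof
  fix B assume B: "B \<in> Ob C"
  have pa: "preadditive C" using ec_pa[OF ec] .
  have cat: "category C" using pa_cat[OF pa] .
  obtain j1 where j1: "is_preenvelope C J1 B j1" "inflation C E j1"
    using M1 B unfolding monic_preenveloping_def by blast
  obtain j2 where j2: "is_preenvelope C J2 B j2" "inflation C E j2"
    using M2 B unfolding monic_preenveloping_def by blast
  define X1 where "X1 = Cod C j1"
  define X2 where "X2 = Cod C j2"
  have j1J: "j1 \<in> J1" and dj1: "Dom C j1 = B"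
    and fac1: "\<forall>f\<in>J1. Dom C f = B \<longrightarrow> (\<exists>g\<in>hom C X1 (Cod C f). Cmp C g j1 = f)"
    using j1(1) unfolding is_preenvelope_def X1_def by auto
  have j2J: "j2 \<in> J2" and dj2: "Dom C j2 = B"
    and fac2: "\<forall>f\<in>J2. Dom C f = B \<longrightarrow> (\<exists>g\<in>hom C X2 (Cod C f). Cmp C g j2 = f)"
    using j2(1) unfolding is_preenvelope_def X2_def by auto
  have j1h: "j1 \<in> hom C B X1" using ideal_Ar[OF I1 j1J] dj1 X1_def by (simp add: hom_def)
  have j2h: "j2 \<in> hom C B X2" using ideal_Ar[OF I2 j2J] dj2 X2_def by (simp add: hom_def)
  obtain m' f' where po: "is_pushout C j1 j2 m' f'" and m'inf: "inflation C E m'"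
    using ec_po[OF ec j1(2), of j2] j1h j2h by (auto simp: hom_def)
  define P where "P = Cod C f'"
  note poD = po_D[OF po]
  have m'h: "m' \<in> hom C X2 P" and f'h: "f' \<in> hom C X1 P" and sq: "Cmp C f' j1 = Cmp C m' j2"
    using poD j1h j2h unfolding P_def X1_def X2_def by auto
  define j where "j = Cmp C m' j2"
  have jh: "j \<in> hom C B P" using cmp_hom[OF cat j2h m'h] j_def by simp
  have jinf: "inflation C E j" using ec_infc[OF ec j2(2) m'inf] j2h m'h j_def by (auto simp: hom_def)
  have jJ1: "j \<in> J1" using ideal_l[OF I1 j1J, of f'] f'h j1h sq j_def by (auto simp: hom_def)
  have jJ2: "j \<in> J2" using ideal_l[OF I2 j2J, of m'] m'h j2h j_def by (auto simp: hom_def)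
  have "is_preenvelope C (J1 \<inter> J2) B j"
    unfolding is_preenvelope_def
  proof (intro conjI ballI impI)
    show "j \<in> J1 \<inter> J2" using jJ1 jJ2 by simp
    show "Dom C j = B" using jh by (simp add: hom_def)
    fix f assume fJ: "f \<in> J1 \<inter> J2" and df: "Dom C f = B"
    define Y where "Y = Cod C f"
    obtain g1 where g1h: "g1 \<in> hom C X1 Y" and g1: "Cmp C g1 j1 = f" using fac1 fJ df Y_def by auto
    obtain g2 where g2h: "g2 \<in> hom C X2 Y" and g2: "Cmp C g2 j2 = f" using fac2 fJ df Y_def by auto
    have "\<forall>g h. g \<in> hom C (Cod C j1) Y \<and> h \<in> hom C (Cod C j2) Y \<and> Cmp C g j1 = Cmp C h j2
     \<longrightarrow> (\<exists>u. u \<in> hom C (Cod C f') Y \<and> Cmp C u f' = g \<and> Cmp C u m' = h)" using poD by blast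
    moreover have "Cmp C g1 j1 = Cmp C g2 j2" using g1 g2 by simp
    ultimately obtain u where uh: "u \<in> hom C P Y" and uf: "Cmp C u f' = g1" and um: "Cmp C u m' = g2"
      using g1h g2h unfolding X1_def X2_def P_def by blast
    have "Cmp C u j = f" using cmp_assoc[OF cat j2h m'h uh] um g2 j_def by simp
    moreover have "u \<in> hom C (Cod C j) (Cod C f)" using uh jh Y_def by (simp add: hom_def)
    ultimately show "\<exists>g\<in>hom C (Cod C j) (Cod C f). Cmp C g j = f" by blast
  qed
  thus "\<exists>j. is_preenvelope C (J1 \<inter> J2) B j \<and> inflation C E j" using jinf by blast
qed

lemma epic_inter:
  assumes ec: "exact_category C E" and I1: "ideal C J1" and I2: "ideal C J2"
    and M1: "epic_precovering C E J1" and M2: "epic_precovering C E J2"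
  shows "epic_precovering C E (J1 \<inter> J2)"
  unfolding epic_precovering_def
proof
  fix A assume A: "A \<in> Ob C"
  have pa: "preadditive C" using ec_pa[OF ec] .
  have cat: "category C" using pa_cat[OF pa] .
  obtain i1 where i1: "is_precover C J1 A i1" "deflation C E i1"
    using M1 A unfolding epic_precovering_def by blast
  obtain i2 where i2: "is_precover C J2 A i2" "deflation C E i2"
    using M2 A unfolding epic_precovering_def by blast
  define Y1 where "Y1 = Dom C i1"
  define Y2 where "Y2 = Dom C i2"
  have i1J: "i1 \<in> J1" and ci1: "Cod C i1 = A"
    and fac1: "\<forall>f\<in>J1. Cod C f = A \<longrightarrow> (\<exists>g\<in>hom C (Dom C f) Y1. Cmp C i1 g = f)"
    using i1(1) unfolding is_precover_def Y1_def by auto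
  have i2J: "i2 \<in> J2" and ci2: "Cod C i2 = A"
    and fac2: "\<forall>f\<in>J2. Cod C f = A \<longrightarrow> (\<exists>g\<in>hom C (Dom C f) Y2. Cmp C i2 g = f)"
    using i2(1) unfolding is_precover_def Y2_def by auto
  have i1h: "i1 \<in> hom C Y1 A" using ideal_Ar[OF I1 i1J] ci1 Y1_def by (simp add: hom_def)
  have i2h: "i2 \<in> hom C Y2 A" using ideal_Ar[OF I2 i2J] ci2 Y2_def by (simp add: hom_def)
  obtain p' f' where pb: "is_pullback C i2 i1 p' f'" and p'def: "deflation C E p'"
    using ec_pb[OF ec i2(2), of i1] i1h i2h by (auto simp: hom_def)
  define P where "P = Dom C f'"
  note pbD = pb_D[OF pb]
  have p'h: "p' \<in> hom C P Y1" and f'h: "f' \<in> hom C P Y2" and sq: "Cmp C i2 f' = Cmp C i1 p'"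
    using pbD i1h i2h unfolding P_def Y1_def Y2_def by auto
  define i where "i = Cmp C i1 p'"
  have ih: "i \<in> hom C P A" using cmp_hom[OF cat p'h i1h] i_def by simp
  have idef: "deflation C E i" using ec_defc[OF ec p'def i1(2)] i1h p'h i_def by (auto simp: hom_def)
  have iJ1: "i \<in> J1" using ideal_r[OF I1 i1J, of p'] p'h i1h i_def by (auto simp: hom_def)
  have iJ2: "i \<in> J2" using ideal_r[OF I2 i2J, of f'] f'h i2h sq i_def by (auto simp: hom_def)
  have "is_precover C (J1 \<inter> J2) A i"
    unfolding is_precover_def
  proof (intro conjI ballI impI)
    show "i \<in> J1 \<inter> J2" using iJ1 iJ2 by simp
    show "Cod C i = A" using ih by (simp add: hom_def)
    fix f assume fJ: "f \<in> J1 \<inter> J2" and cf: "Cod C f = A"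
    define W where "W = Dom C f"
    obtain g1 where g1h: "g1 \<in> hom C W Y1" and g1: "Cmp C i1 g1 = f" using fac1 fJ cf W_def by auto
    obtain g2 where g2h: "g2 \<in> hom C W Y2" and g2: "Cmp C i2 g2 = f" using fac2 fJ cf W_def by auto
    have "\<forall>g h. g \<in> hom C W (Dom C i2) \<and> h \<in> hom C W (Dom C i1) \<and> Cmp C i2 g = Cmp C i1 h
     \<longrightarrow> (\<exists>u. u \<in> hom C W (Dom C f') \<and> Cmp C f' u = g \<and> Cmp C p' u = h)" using pbD by blast
    moreover have "Cmp C i2 g2 = Cmp C i1 g1" using g1 g2 by simp
    ultimately obtain u where uh: "u \<in> hom C W P" and uf: "Cmp C f' u = g2" and up: "Cmp C p' u = g1"
      using g1h g2h unfolding Y1_def Y2_def P_def by blast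
    have "Cmp C i u = f" using cmp_assoc[OF cat uh p'h i1h] up g1 i_def by simp
    moreover have "u \<in> hom C (Dom C f) (Dom C i)" using uh ih W_def by (simp add: hom_def)
    ultimately show "\<exists>g\<in>hom C (Dom C f) (Dom C i). Cmp C i g = f" by blast
  qed
  thus "\<exists>i. is_precover C (J1 \<inter> J2) A i \<and> deflation C E i" using idef by blast
qed


lemma monic_sum:
  assumes ec: "exact_category C E" and I1: "ideal C J1" and I2: "ideal C J2"
    and M1: "monic_preenveloping C E J1" and M2: "monic_preenveloping C E J2"
  shows "monic_preenveloping C E (ideal_sum C J1 J2)"
  unfolding monic_preenveloping_def
proof
  fix B assume B: "B \<in> Ob C"
  have pa: "preadditive C" using ec_pa[OF ec] .
  have cat: "category C" using pa_cat[OF pa] .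
  obtain j1 where j1: "is_preenvelope C J1 B j1" "inflation C E j1"
    using M1 B unfolding monic_preenveloping_def by blast
  obtain j2 where j2: "is_preenvelope C J2 B j2" "inflation C E j2"
    using M2 B unfolding monic_preenveloping_def by blast
  define X1 where "X1 = Cod C j1"
  define X2 where "X2 = Cod C j2"
  have j1J: "j1 \<in> J1" and dj1: "Dom C j1 = B"
    and fac1: "\<forall>f\<in>J1. Dom C f = B \<longrightarrow> (\<exists>g\<in>hom C X1 (Cod C f). Cmp C g j1 = f)"
    using j1(1) unfolding is_preenvelope_def X1_def by auto
  have j2J: "j2 \<in> J2" and dj2: "Dom C j2 = B"
    and fac2: "\<forall>f\<in>J2. Dom C f = B \<longrightarrow> (\<exists>g\<in>hom C X2 (Cod C f). Cmp C g j2 = f)"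
    using j2(1) unfolding is_preenvelope_def X2_def by auto
  have j1h: "j1 \<in> hom C B X1" using ideal_Ar[OF I1 j1J] dj1 X1_def by (simp add: hom_def)
  have j2h: "j2 \<in> hom C B X2" using ideal_Ar[OF I2 j2J] dj2 X2_def by (simp add: hom_def)
  have X2: "X2 \<in> Ob C" using hom_obs[OF cat j2h] by simp
  obtain K m where K: "K \<in> Ob C" and mh: "m \<in> hom C K X2" and minf: "inflation C E m"
    and kz: "\<forall>Y h. h \<in> hom C K Y \<longrightarrow> h = Zero C K Y"
    using kzero_in[OF ec X2] by blast
  have zKB: "Zero C K B \<in> hom C K B" using zero_hom[OF pa K B] .
  obtain t e where po1: "is_pushout C m (Zero C K B) t e" and tinf: "inflation C E t"
    using ec_po[OF ec minf, of "Zero C K B"] zKB mh by (auto simp: hom_def)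
  define Q where "Q = Cod C e"
  note po1D = po_D[OF po1]
  have th: "t \<in> hom C B Q" and eh: "e \<in> hom C X2 Q"
    using po1D zKB mh unfolding Q_def by (auto simp: hom_def)
  have ej2: "Cmp C e j2 \<in> hom C B Q" using cmp_hom[OF cat j2h eh] .
  obtain n where nh: "n \<in> hom C B Q" and nz: "Add C (Cmp C e j2) n = Zero C B Q"
    using neg_ex[OF pa ej2] by blast
  define s where "s = Add C t n"
  have sh: "s \<in> hom C B Q" using add_hom[OF pa th nh] s_def by simp
  have ts: "Add C s (Cmp C e j2) = t"
  proof -
    have "Add C s (Cmp C e j2) = Add C t (Add C n (Cmp C e j2))" using s_def add_assoc[OF pa th nh ej2] by simp
    also have "\<dots> = Add C t (Add C (Cmp C e j2) n)" using add_comm[OF pa nh ej2] by simp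
    also have "\<dots> = t" using nz add_zero[OF pa th] by simp
    finally show ?thesis .
  qed
  obtain m' f' where po2: "is_pushout C j1 s m' f'" and m'inf: "inflation C E m'"
    using ec_po[OF ec j1(2), of s] sh j1h by (auto simp: hom_def)
  define P where "P = Cod C f'"
  note po2D = po_D[OF po2]
  have m'h: "m' \<in> hom C Q P" and f'h: "f' \<in> hom C X1 P" and sq: "Cmp C f' j1 = Cmp C m' s"
    using po2D sh j1h unfolding P_def X1_def by (auto simp: hom_def)
  define j where "j = Cmp C m' t"
  have jh: "j \<in> hom C B P" using cmp_hom[OF cat th m'h] j_def by simp
  have jinf: "inflation C E j" using ec_infc[OF ec tinf m'inf] th m'h j_def by (auto simp: hom_def)
  have me: "Cmp C m' e \<in> hom C X2 P" using cmp_hom[OF cat eh m'h] .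
  have jsum: "j = Add C (Cmp C f' j1) (Cmp C (Cmp C m' e) j2)"
  proof -
    have "j = Cmp C m' (Add C s (Cmp C e j2))" using ts j_def by simp
    also have "\<dots> = Add C (Cmp C m' s) (Cmp C m' (Cmp C e j2))" using dist_l[OF pa sh ej2 m'h] .
    also have "\<dots> = Add C (Cmp C f' j1) (Cmp C (Cmp C m' e) j2)" using sq cmp_assoc[OF cat j2h eh m'h] by simp
    finally show ?thesis .
  qed
  have h1: "Cmp C f' j1 \<in> hom C B P" using cmp_hom[OF cat j1h f'h] .
  have h2: "Cmp C (Cmp C m' e) j2 \<in> hom C B P" using cmp_hom[OF cat j2h me] .
  have a1: "Cmp C f' j1 \<in> J1" using ideal_l[OF I1 j1J, of f'] f'h j1h by (auto simp: hom_def)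
  have a2: "Cmp C (Cmp C m' e) j2 \<in> J2" using ideal_l[OF I2 j2J, of "Cmp C m' e"] me j2h by (auto simp: hom_def)
  have jin: "j \<in> ideal_sum C J1 J2"
  proof -
    have "Dom C (Cmp C f' j1) = Dom C (Cmp C (Cmp C m' e) j2)" "Cod C (Cmp C f' j1) = Cod C (Cmp C (Cmp C m' e) j2)"
      using h1 h2 by (auto simp: hom_def)
    thus ?thesis unfolding ideal_sum_def using jsum a1 a2 by blast
  qed
  have "is_preenvelope C (ideal_sum C J1 J2) B j"
    unfolding is_preenvelope_def
  proof (intro conjI ballI impI)
    show "j \<in> ideal_sum C J1 J2" by (rule jin)
    show "Dom C j = B" using jh by (simp add: hom_def)
    fix f assume fin: "f \<in> ideal_sum C J1 J2" and df: "Dom C f = B"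
    obtain f1 f2 where f: "f = Add C f1 f2" and f1J: "f1 \<in> J1" and f2J: "f2 \<in> J2"
      and dd: "Dom C f1 = Dom C f2" and cc: "Cod C f1 = Cod C f2"
      using fin unfolding ideal_sum_def by blast
    define Y where "Y = Cod C f1"
    have f1h0: "f1 \<in> hom C (Dom C f1) Y" using ideal_Ar[OF I1 f1J] Y_def by (simp add: hom_def)
    have f2h0: "f2 \<in> hom C (Dom C f1) Y" using ideal_Ar[OF I2 f2J] Y_def dd cc by (simp add: hom_def)
    have "f \<in> hom C (Dom C f1) Y" using add_hom[OF pa f1h0 f2h0] f by simp
    hence dB: "Dom C f1 = B" and cf: "Cod C f = Y" using df by (auto simp: hom_def)
    have f1h: "f1 \<in> hom C B Y" using f1h0 dB by simp
    have f2h: "f2 \<in> hom C B Y" using f2h0 dB by simp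
    have fh: "f \<in> hom C B Y" using add_hom[OF pa f1h f2h] f by simp
    obtain g1 where g1h: "g1 \<in> hom C X1 Y" and g1: "Cmp C g1 j1 = f1"
      using fac1 f1J dB Y_def by auto
    obtain g2 where g2h: "g2 \<in> hom C X2 Y" and g2: "Cmp C g2 j2 = f2"
      using fac2 f2J dB dd cc Y_def by auto
    have z1: "Cmp C g2 m = Zero C K Y" using kz cmp_hom[OF cat mh g2h] by blast
    have z2: "Cmp C f (Zero C K B) = Zero C K Y" using kz cmp_hom[OF cat zKB fh] by blast
    have "\<forall>g h. g \<in> hom C (Cod C m) Y \<and> h \<in> hom C (Cod C (Zero C K B)) Y \<and> Cmp C g m = Cmp C h (Zero C K B)
     \<longrightarrow> (\<exists>u. u \<in> hom C (Cod C e) Y \<and> Cmp C u e = g \<and> Cmp C u t = h)" using po1D by blast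
    moreover have "Cmp C g2 m = Cmp C f (Zero C K B)" using z1 z2 by simp
    moreover have "Cod C m = X2" "Cod C (Zero C K B) = B" using mh zKB by (auto simp: hom_def)
    ultimately obtain h where hh: "h \<in> hom C Q Y" and he: "Cmp C h e = g2" and ht: "Cmp C h t = f"
      using g2h fh unfolding Q_def by metis
    have hsh: "Cmp C h s \<in> hom C B Y" using cmp_hom[OF cat sh hh] .
    have hs: "Cmp C h s = f1"
    proof -
      have "f = Cmp C h (Add C s (Cmp C e j2))" using ht ts by simp
      also have "\<dots> = Add C (Cmp C h s) (Cmp C h (Cmp C e j2))" using dist_l[OF pa sh ej2 hh] .
      also have "Cmp C h (Cmp C e j2) = f2" using cmp_assoc[OF cat j2h eh hh] he g2 by simp
      finally have "Add C (Cmp C h s) f2 = Add C f1 f2" using f by simp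
      thus ?thesis using add_cancel[OF pa hsh f1h f2h] by simp
    qed
    have "\<forall>g h. g \<in> hom C (Cod C j1) Y \<and> h \<in> hom C (Cod C s) Y \<and> Cmp C g j1 = Cmp C h s
     \<longrightarrow> (\<exists>u. u \<in> hom C (Cod C f') Y \<and> Cmp C u f' = g \<and> Cmp C u m' = h)" using po2D by blast
    moreover have "Cmp C g1 j1 = Cmp C h s" using g1 hs by simp
    moreover have "Cod C j1 = X1" "Cod C s = Q" using j1h sh by (auto simp: hom_def)
    ultimately obtain u where uh: "u \<in> hom C P Y" and uf: "Cmp C u f' = g1" and um: "Cmp C u m' = h"
      using g1h hh unfolding P_def by metis
    have "Cmp C u j = f" using cmp_assoc[OF cat th m'h uh] um ht j_def by simp
    moreover have "u \<in> hom C (Cod C j) (Cod C f)" using uh jh cf by (simp add: hom_def)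
    ultimately show "\<exists>g\<in>hom C (Cod C j) (Cod C f). Cmp C g j = f" by blast
  qed
  thus "\<exists>j. is_preenvelope C (ideal_sum C J1 J2) B j \<and> inflation C E j" using jinf by blast
qed


lemma epic_sum:
  assumes ec: "exact_category C E" and I1: "ideal C J1" and I2: "ideal C J2"
    and M1: "epic_precovering C E J1" and M2: "epic_precovering C E J2"
  shows "epic_precovering C E (ideal_sum C J1 J2)"
  unfolding epic_precovering_def
proof
  fix A assume A: "A \<in> Ob C"
  have pa: "preadditive C" using ec_pa[OF ec] .
  have cat: "category C" using pa_cat[OF pa] .
  obtain i1 where i1: "is_precover C J1 A i1" "deflation C E i1"
    using M1 A unfolding epic_precovering_def by blast
  obtain i2 where i2: "is_precover C J2 A i2" "deflation C E i2"
    using M2 A unfolding epic_precovering_def by blast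
  define Y1 where "Y1 = Dom C i1"
  define Y2 where "Y2 = Dom C i2"
  have i1J: "i1 \<in> J1" and ci1: "Cod C i1 = A"
    and fac1: "\<forall>f\<in>J1. Cod C f = A \<longrightarrow> (\<exists>g\<in>hom C (Dom C f) Y1. Cmp C i1 g = f)"
    using i1(1) unfolding is_precover_def Y1_def by auto
  have i2J: "i2 \<in> J2" and ci2: "Cod C i2 = A"
    and fac2: "\<forall>f\<in>J2. Cod C f = A \<longrightarrow> (\<exists>g\<in>hom C (Dom C f) Y2. Cmp C i2 g = f)"
    using i2(1) unfolding is_precover_def Y2_def by auto
  have i1h: "i1 \<in> hom C Y1 A" using ideal_Ar[OF I1 i1J] ci1 Y1_def by (simp add: hom_def)
  have i2h: "i2 \<in> hom C Y2 A" using ideal_Ar[OF I2 i2J] ci2 Y2_def by (simp add: hom_def)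
  have Y2: "Y2 \<in> Ob C" using hom_obs[OF cat i2h] by simp
  obtain K p where K: "K \<in> Ob C" and ph: "p \<in> hom C Y2 K" and pdef: "deflation C E p"
    and kz: "\<forall>Y h. h \<in> hom C Y K \<longrightarrow> h = Zero C Y K"
    using kzero_out[OF ec Y2] by blast
  have zAK: "Zero C A K \<in> hom C A K" using zero_hom[OF pa A K] .
  obtain t e where pb1: "is_pullback C p (Zero C A K) t e" and tdef: "deflation C E t"
    using ec_pb[OF ec pdef, of "Zero C A K"] zAK ph by (auto simp: hom_def)
  define Q where "Q = Dom C e"
  note pb1D = pb_D[OF pb1]
  have th: "t \<in> hom C Q A" and eh: "e \<in> hom C Q Y2"
    using pb1D zAK ph unfolding Q_def by (auto simp: hom_def)
  have ie: "Cmp C i2 e \<in> hom C Q A" using cmp_hom[OF cat eh i2h] .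
  obtain n where nh: "n \<in> hom C Q A" and nz: "Add C (Cmp C i2 e) n = Zero C Q A"
    using neg_ex[OF pa ie] by blast
  define s where "s = Add C t n"
  have sh: "s \<in> hom C Q A" using add_hom[OF pa th nh] s_def by simp
  have ts: "Add C s (Cmp C i2 e) = t"
  proof -
    have "Add C s (Cmp C i2 e) = Add C t (Add C n (Cmp C i2 e))" using s_def add_assoc[OF pa th nh ie] by simp
    also have "\<dots> = Add C t (Add C (Cmp C i2 e) n)" using add_comm[OF pa nh ie] by simp
    also have "\<dots> = t" using nz add_zero[OF pa th] by simp
    finally show ?thesis .
  qed
  obtain p' f' where pb2: "is_pullback C i1 s p' f'" and p'def: "deflation C E p'"
    using ec_pb[OF ec i1(2), of s] sh i1h by (auto simp: hom_def)
  define P where "P = Dom C f'"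
  note pb2D = pb_D[OF pb2]
  have p'h: "p' \<in> hom C P Q" and f'h: "f' \<in> hom C P Y1" and sq: "Cmp C i1 f' = Cmp C s p'"
    using pb2D sh i1h unfolding P_def Y1_def by (auto simp: hom_def)
  define i where "i = Cmp C t p'"
  have ih: "i \<in> hom C P A" using cmp_hom[OF cat p'h th] i_def by simp
  have idef: "deflation C E i" using ec_defc[OF ec p'def tdef] th p'h i_def by (auto simp: hom_def)
  have ep: "Cmp C e p' \<in> hom C P Y2" using cmp_hom[OF cat p'h eh] .
  have isum: "i = Add C (Cmp C i1 f') (Cmp C i2 (Cmp C e p'))"
  proof -
    have "i = Cmp C (Add C s (Cmp C i2 e)) p'" using ts i_def by simp
    also have "\<dots> = Add C (Cmp C s p') (Cmp C (Cmp C i2 e) p')" using dist_r[OF pa p'h sh ie] .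
    also have "\<dots> = Add C (Cmp C i1 f') (Cmp C i2 (Cmp C e p'))" using sq cmp_assoc[OF cat p'h eh i2h] by simp
    finally show ?thesis .
  qed
  have h1: "Cmp C i1 f' \<in> hom C P A" using cmp_hom[OF cat f'h i1h] .
  have h2: "Cmp C i2 (Cmp C e p') \<in> hom C P A" using cmp_hom[OF cat ep i2h] .
  have a1: "Cmp C i1 f' \<in> J1" using ideal_r[OF I1 i1J, of f'] f'h i1h by (auto simp: hom_def)
  have a2: "Cmp C i2 (Cmp C e p') \<in> J2" using ideal_r[OF I2 i2J, of "Cmp C e p'"] ep i2h by (auto simp: hom_def)
  have iin: "i \<in> ideal_sum C J1 J2"
  proof -
    have "Dom C (Cmp C i1 f') = Dom C (Cmp C i2 (Cmp C e p'))" "Cod C (Cmp C i1 f') = Cod C (Cmp C i2 (Cmp C e p'))"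
      using h1 h2 by (auto simp: hom_def)
    thus ?thesis unfolding ideal_sum_def using isum a1 a2 by blast
  qed
  have "is_precover C (ideal_sum C J1 J2) A i"
    unfolding is_precover_def
  proof (intro conjI ballI impI)
    show "i \<in> ideal_sum C J1 J2" by (rule iin)
    show "Cod C i = A" using ih by (simp add: hom_def)
    fix f assume fin: "f \<in> ideal_sum C J1 J2" and cf: "Cod C f = A"
    obtain f1 f2 where f: "f = Add C f1 f2" and f1J: "f1 \<in> J1" and f2J: "f2 \<in> J2"
      and dd: "Dom C f1 = Dom C f2" and cc: "Cod C f1 = Cod C f2"
      using fin unfolding ideal_sum_def by blast
    define W where "W = Dom C f1"
    have f1h0: "f1 \<in> hom C W (Cod C f1)" using ideal_Ar[OF I1 f1J] W_def by (simp add: hom_def)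
    have f2h0: "f2 \<in> hom C W (Cod C f1)" using ideal_Ar[OF I2 f2J] W_def dd cc by (simp add: hom_def)
    have "f \<in> hom C W (Cod C f1)" using add_hom[OF pa f1h0 f2h0] f by simp
    hence cA: "Cod C f1 = A" and df: "Dom C f = W" using cf by (auto simp: hom_def)
    have f1h: "f1 \<in> hom C W A" using f1h0 cA by simp
    have f2h: "f2 \<in> hom C W A" using f2h0 cA by simp
    have fh: "f \<in> hom C W A" using add_hom[OF pa f1h f2h] f by simp
    obtain g1 where g1h: "g1 \<in> hom C W Y1" and g1: "Cmp C i1 g1 = f1"
      using fac1 f1J cA W_def by auto
    obtain g2 where g2h: "g2 \<in> hom C W Y2" and g2: "Cmp C i2 g2 = f2"
      using fac2 f2J cA dd cc W_def by auto
    have z1: "Cmp C p g2 = Zero C W K" using kz cmp_hom[OF cat g2h ph] by blast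
    have z2: "Cmp C (Zero C A K) f = Zero C W K" using kz cmp_hom[OF cat fh zAK] by blast
    have "\<forall>g h. g \<in> hom C W (Dom C p) \<and> h \<in> hom C W (Dom C (Zero C A K)) \<and> Cmp C p g = Cmp C (Zero C A K) h
     \<longrightarrow> (\<exists>u. u \<in> hom C W (Dom C e) \<and> Cmp C e u = g \<and> Cmp C t u = h)" using pb1D by blast
    moreover have "Cmp C p g2 = Cmp C (Zero C A K) f" using z1 z2 by simp
    moreover have "Dom C p = Y2" "Dom C (Zero C A K) = A" using ph zAK by (auto simp: hom_def)
    ultimately obtain h where hh: "h \<in> hom C W Q" and he: "Cmp C e h = g2" and ht: "Cmp C t h = f"
      using g2h fh unfolding Q_def by metis
    have hsh: "Cmp C s h \<in> hom C W A" using cmp_hom[OF cat hh sh] .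
    have hs: "Cmp C s h = f1"
    proof -
      have "f = Cmp C (Add C s (Cmp C i2 e)) h" using ht ts by simp
      also have "\<dots> = Add C (Cmp C s h) (Cmp C (Cmp C i2 e) h)" using dist_r[OF pa hh sh ie] .
      also have "Cmp C (Cmp C i2 e) h = f2" using cmp_assoc[OF cat hh eh i2h] he g2 by simp
      finally have "Add C (Cmp C s h) f2 = Add C f1 f2" using f by simp
      thus ?thesis using add_cancel[OF pa hsh f1h f2h] by simp
    qed
    have "\<forall>g h. g \<in> hom C W (Dom C i1) \<and> h \<in> hom C W (Dom C s) \<and> Cmp C i1 g = Cmp C s h
     \<longrightarrow> (\<exists>u. u \<in> hom C W (Dom C f') \<and> Cmp C f' u = g \<and> Cmp C p' u = h)" using pb2D by blast
    moreover have "Cmp C i1 g1 = Cmp C s h" using g1 hs by simp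
    moreover have "Dom C i1 = Y1" "Dom C s = Q" using i1h sh by (auto simp: hom_def)
    ultimately obtain u where uh: "u \<in> hom C W P" and uf: "Cmp C f' u = g1" and up: "Cmp C p' u = h"
      using g1h hh unfolding P_def by metis
    have "Cmp C i u = f" using cmp_assoc[OF cat uh p'h th] up ht i_def by simp
    moreover have "u \<in> hom C (Dom C f) (Dom C i)" using uh ih df by (simp add: hom_def)
    ultimately show "\<exists>g\<in>hom C (Dom C f) (Dom C i). Cmp C i g = f" by blast
  qed
  thus "\<exists>i. is_precover C (ideal_sum C J1 J2) A i \<and> deflation C E i" using idef by blast
qed

theorem proposition2p2:
  fixes C :: "('o, 'm) cat" and E :: "('m \<times> 'm) set" and J1 J2 :: "'m set"
  assumes "exact_category C E" and "ideal C J1" and "ideal C J2"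
  shows "(monic_preenveloping C E J1 \<and> monic_preenveloping C E J2 \<longrightarrow>
            monic_preenveloping C E (J1 \<inter> J2) \<and> monic_preenveloping C E (ideal_sum C J1 J2)) \<and>
         (epic_precovering C E J1 \<and> epic_precovering C E J2 \<longrightarrow>
            epic_precovering C E (J1 \<inter> J2) \<and> epic_precovering C E (ideal_sum C J1 J2))"
  using monic_inter[OF assms] monic_sum[OF assms] epic_inter[OF assms] epic_sum[OF assms] by blast

end
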